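(* Let $q\equiv 3 \pmod 4$ be a prime power and let $P=\{(x,y,z)\in\mathbb{F}_q^3 : z=x^2+y^2\}$. There are absolute constants $C,c>0$ such that for every set $X\subset P$ with $|X|\ge C q^{5/3}$ we have \[\mathcal{E}_{\mathtt{nt}}^+(X)\ge c\,\frac{|X|^4}{q^3}.\]
   Context: For $X\subset P$, $\mathcal{E}_{\mathtt{nt}}^+(X)$ denotes the number of non-trivial energy tuples in $X$, i.e. the number of tuples $(a,b,c,d)\in X^4$ with $a+b=c+d$ and $a,b,c,d$ pairwise distinct. The paper writes $|X|\gg q^{5/3}$ and $\gg$ for inequalities up to absolute positive constants. *)

theory Defs
  imports Complex_Main "HOL-Algebra.Ring"
begin

definition paraboloid :: "('a, 'b) ring_scheme \<Rightarrow> ('a \<times> 'a \<times> 'a) set" where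
  "paraboloid R = {(x, y, z). x \<in> carrier R \<and> y \<in> carrier R \<and> z \<in> carrier R \<and>
                     z = x \<otimes>\<^bsub>R\<^esub> x \<oplus>\<^bsub>R\<^esub> y \<otimes>\<^bsub>R\<^esub> y}"

definition vadd3 :: "('a, 'b) ring_scheme \<Rightarrow> 'a \<times> 'a \<times> 'a \<Rightarrow> 'a \<times> 'a \<times> 'a \<Rightarrow> 'a \<times> 'a \<times> 'a" where
  "vadd3 R u v = (fst u \<oplus>\<^bsub>R\<^esub> fst v,
                  fst (snd u) \<oplus>\<^bsub>R\<^esub> fst (snd v),
                  snd (snd u) \<oplus>\<^bsub>R\<^esub> snd (snd v))"

definition nt_energy :: "('a, 'b) ring_scheme \<Rightarrow> ('a \<times> 'a \<times> 'a) set \<Rightarrow> nat" where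
  "nt_energy R X = card {(a, b, c, d). a \<in> X \<and> b \<in> X \<and> c \<in> X \<and> d \<in> X \<and>
                     vadd3 R a b = vadd3 R c d \<and> distinct [a, b, c, d]}"

end

theory Submission
  imports Defs "HOL-Analysis.Analysis"
begin

lemma energy_abstract:
  fixes f :: "'a \<Rightarrow> 'a \<Rightarrow> 'b"
  assumes finX: "finite X" and finS: "finite S0"
    and mapS: "\<And>a b. a \<in> X \<Longrightarrow> b \<in> X \<Longrightarrow> f a b \<in> S0"
    and canc: "\<And>a b c. a \<in> X \<Longrightarrow> b \<in> X \<Longrightarrow> c \<in> X \<Longrightarrow> f a b = f a c \<Longrightarrow> b = c"
    and comm: "\<And>a b. a \<in> X \<Longrightarrow> b \<in> X \<Longrightarrow> f a b = f b a"
  shows "real (card X)^4 \<le> real (card S0) * (real (card {(a,b,c,d). a\<in>X \<and> b\<in>X \<and> c\<in>X \<and> d\<in>X \<and> f a b = f c d \<and> distinct [a,b,c,d]}) + 6 * real (card X)^2)"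
proof -
  define T where "T = {(a,b,c,d). a\<in>X \<and> b\<in>X \<and> c\<in>X \<and> d\<in>X \<and> f a b = f c d}"
  define NT where "NT = {(a,b,c,d). a\<in>X \<and> b\<in>X \<and> c\<in>X \<and> d\<in>X \<and> f a b = f c d \<and> distinct [a,b,c,d]}"
  define A where "A = X \<times> X"
  define g where "g = (\<lambda>p. case p of (a,b) \<Rightarrow> f a b)"
  define r where "r = (\<lambda>s. card {p\<in>A. g p = s})"
  have finA: "finite A" using finX by (simp add: A_def)
  have finT: "finite T"
    by (rule finite_subset[of _ "X \<times> X \<times> X \<times> X"]) (auto simp: T_def finX)
  have "T = (\<lambda>((a,b),(c,d)). (a,b,c,d)) ` (Sigma A (\<lambda>p. {p'\<in>A. g p' = g p}))"
    by (auto simp: T_def A_def g_def image_iff)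
  moreover have "inj_on (\<lambda>((a,b),(c,d)). (a,b,c,d)) (Sigma A (\<lambda>p. {p'\<in>A. g p' = g p}))"
    by (auto simp: inj_on_def)
  ultimately have "card T = card (Sigma A (\<lambda>p. {p'\<in>A. g p' = g p}))"
    by (simp add: card_image)
  also have "\<dots> = (\<Sum>p\<in>A. r (g p))"
    using finA by (simp add: card_SigmaI r_def)
  also have "\<dots> = (\<Sum>s\<in>g ` A. (\<Sum>p\<in>{p\<in>A. g p = s}. r (g p)))"
    using finA by (rule sum.image_gen)
  also have "\<dots> = (\<Sum>s\<in>g ` A. r s * r s)"
    by (rule sum.cong) (auto simp: r_def)
  finally have cT: "card T = (\<Sum>s\<in>g ` A. r s * r s)" .
  have "card A = (\<Sum>p\<in>A. 1::nat)" by simp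
  also have "\<dots> = (\<Sum>s\<in>g ` A. (\<Sum>p\<in>{p\<in>A. g p = s}. 1))"
    using finA by (rule sum.image_gen)
  also have "\<dots> = (\<Sum>s\<in>g ` A. r s)" by (simp add: r_def)
  finally have cA: "card A = (\<Sum>s\<in>g ` A. r s)" .
  have "(\<Sum>s\<in>g ` A. real (r s) * 1)\<^sup>2 \<le> (\<Sum>s\<in>g ` A. (real (r s))\<^sup>2) * (\<Sum>s\<in>g ` A. 1\<^sup>2)"
    by (rule Cauchy_Schwarz_ineq_sum)
  hence h1: "(real (card A))\<^sup>2 \<le> real (card T) * real (card (g ` A))"
    by (simp add: cA cT power2_eq_square)
  have h2: "card (g ` A) \<le> card S0"
    by (rule card_mono[OF finS]) (auto simp: g_def A_def mapS)
  have "(real (card A))\<^sup>2 \<le> real (card T) * real (card S0)"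
  proof -
    have "real (card T) * real (card (g ` A)) \<le> real (card T) * real (card S0)"
      by (rule mult_left_mono) (use h2 in simp_all)
    with h1 show ?thesis by linarith
  qed
  moreover have "real (card A) = real (card X)^2"
    by (simp add: A_def card_cartesian_product power2_eq_square)
  ultimately have step1: "real (card X)^4 \<le> real (card T) * real (card S0)"
    by (simp add: power_mult[symmetric])
  define T1 where "T1 = {t\<in>T. case t of (a,b,c,d) \<Rightarrow> a = b}"
  define T2 where "T2 = {t\<in>T. case t of (a,b,c,d) \<Rightarrow> c = d}"
  define T3 where "T3 = {t\<in>T. case t of (a,b,c,d) \<Rightarrow> a = c}"
  define T4 where "T4 = {t\<in>T. case t of (a,b,c,d) \<Rightarrow> a = d}"
  define T5 where "T5 = {t\<in>T. case t of (a,b,c,d) \<Rightarrow> b = c}"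
  define T6 where "T6 = {t\<in>T. case t of (a,b,c,d) \<Rightarrow> b = d}"
  have sub: "T \<subseteq> NT \<union> T1 \<union> T2 \<union> T3 \<union> T4 \<union> T5 \<union> T6"
    by (auto simp: T_def NT_def T1_def T2_def T3_def T4_def T5_def T6_def)
  have fXX: "finite (X \<times> X)" using finX by simp
  have c1: "card T1 \<le> card X * card X"
  proof -
    have "card T1 \<le> card (X \<times> X)"
    proof (rule card_inj_on_le[OF _ _ fXX, of "\<lambda>(a,b,c,d). (a,c)"])
      show "inj_on (\<lambda>(a,b,c,d). (a,c)) T1"
        unfolding inj_on_def T1_def T_def by clarsimp (metis canc)
    qed (auto simp: T1_def T_def)
    thus ?thesis by (simp add: card_cartesian_product)
  qed
  have c2: "card T2 \<le> card X * card X"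
  proof -
    have "card T2 \<le> card (X \<times> X)"
    proof (rule card_inj_on_le[OF _ _ fXX, of "\<lambda>(a,b,c,d). (a,c)"])
      show "inj_on (\<lambda>(a,b,c,d). (a,c)) T2"
        unfolding inj_on_def T2_def T_def by clarsimp (metis canc)
    qed (auto simp: T2_def T_def)
    thus ?thesis by (simp add: card_cartesian_product)
  qed
  have c3: "card T3 \<le> card X * card X"
  proof -
    have "card T3 \<le> card (X \<times> X)"
    proof (rule card_inj_on_le[OF _ _ fXX, of "\<lambda>(a,b,c,d). (a,b)"])
      show "inj_on (\<lambda>(a,b,c,d). (a,b)) T3"
        unfolding inj_on_def T3_def T_def by clarsimp (metis canc)
    qed (auto simp: T3_def T_def)
    thus ?thesis by (simp add: card_cartesian_product)
  qed
  have c4: "card T4 \<le> card X * card X"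
  proof -
    have "card T4 \<le> card (X \<times> X)"
    proof (rule card_inj_on_le[OF _ _ fXX, of "\<lambda>(a,b,c,d). (a,b)"])
      show "inj_on (\<lambda>(a,b,c,d). (a,b)) T4"
        unfolding inj_on_def T4_def T_def by clarsimp (metis canc comm)
    qed (auto simp: T4_def T_def)
    thus ?thesis by (simp add: card_cartesian_product)
  qed
  have c5: "card T5 \<le> card X * card X"
  proof -
    have "card T5 \<le> card (X \<times> X)"
    proof (rule card_inj_on_le[OF _ _ fXX, of "\<lambda>(a,b,c,d). (a,b)"])
      show "inj_on (\<lambda>(a,b,c,d). (a,b)) T5"
        unfolding inj_on_def T5_def T_def by clarsimp (metis canc)
    qed (auto simp: T5_def T_def)
    thus ?thesis by (simp add: card_cartesian_product)
  qed
  have c6: "card T6 \<le> card X * card X"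
  proof -
    have "card T6 \<le> card (X \<times> X)"
    proof (rule card_inj_on_le[OF _ _ fXX, of "\<lambda>(a,b,c,d). (a,b)"])
      show "inj_on (\<lambda>(a,b,c,d). (a,b)) T6"
        unfolding inj_on_def T6_def T_def by clarsimp (metis canc comm)
    qed (auto simp: T6_def T_def)
    thus ?thesis by (simp add: card_cartesian_product)
  qed
  have fins: "finite NT" "finite T1" "finite T2" "finite T3" "finite T4" "finite T5" "finite T6"
    using finT by (auto simp: NT_def T_def T1_def T2_def T3_def T4_def T5_def T6_def
        intro: finite_subset[OF _ finT])
  have "card T \<le> card (NT \<union> T1 \<union> T2 \<union> T3 \<union> T4 \<union> T5 \<union> T6)"
    by (rule card_mono[OF _ sub]) (simp add: fins)
  also have "\<dots> \<le> card NT + card T1 + card T2 + card T3 + card T4 + card T5 + card T6"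
    by (meson card_Un_le le_trans add_le_mono order_refl)
  finally have "card T \<le> card NT + 6 * (card X * card X)"
    using c1 c2 c3 c4 c5 c6 by linarith
  hence "real (card T) \<le> real (card NT + 6 * (card X * card X))"
    by (rule of_nat_mono)
  hence "real (card T) \<le> real (card NT) + 6 * real (card X)^2"
    by (simp add: power2_eq_square)
  hence "real (card T) * real (card S0) \<le> (real (card NT) + 6 * real (card X)^2) * real (card S0)"
    by (simp add: mult_right_mono)
  with step1 show ?thesis unfolding NT_def by (simp add: mult.commute)
qed


lemma (in ring) add_lcancel_aux:
  assumes "x \<in> carrier R" "y \<in> carrier R" "z \<in> carrier R" "x \<oplus> y = x \<oplus> z"
  shows "y = z"
proof -
  have "y \<oplus> x = z \<oplus> x" using assms by (simp add: a_comm)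
  thus ?thesis using assms(1-3) by simp
qed

lemma vadd3_props:
  assumes R: "ring R"
  shows "\<And>u v. u \<in> carrier R \<times> carrier R \<times> carrier R \<Longrightarrow> v \<in> carrier R \<times> carrier R \<times> carrier R
           \<Longrightarrow> vadd3 R u v \<in> carrier R \<times> carrier R \<times> carrier R"
    and "\<And>u v. u \<in> carrier R \<times> carrier R \<times> carrier R \<Longrightarrow> v \<in> carrier R \<times> carrier R \<times> carrier R
           \<Longrightarrow> vadd3 R u v = vadd3 R v u"
    and "\<And>u v w. u \<in> carrier R \<times> carrier R \<times> carrier R \<Longrightarrow> v \<in> carrier R \<times> carrier R \<times> carrier R
           \<Longrightarrow> w \<in> carrier R \<times> carrier R \<times> carrier R \<Longrightarrow> vadd3 R u v = vadd3 R u w \<Longrightarrow> v = w"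
proof -
  interpret ring R by (rule R)
  fix u v w :: "'a \<times> 'a \<times> 'a"
  show "u \<in> carrier R \<times> carrier R \<times> carrier R \<Longrightarrow> v \<in> carrier R \<times> carrier R \<times> carrier R
           \<Longrightarrow> vadd3 R u v \<in> carrier R \<times> carrier R \<times> carrier R"
  proof -
    assume "u \<in> carrier R \<times> carrier R \<times> carrier R" "v \<in> carrier R \<times> carrier R \<times> carrier R"
    then obtain u1 u2 u3 v1 v2 v3 where u: "u = (u1,u2,u3)" and v: "v = (v1,v2,v3)"
      and c: "u1 \<in> carrier R" "u2 \<in> carrier R" "u3 \<in> carrier R" "v1 \<in> carrier R" "v2 \<in> carrier R" "v3 \<in> carrier R"
      by (metis mem_Times_iff prod.collapse)
    show ?thesis unfolding u v vadd3_def using c by simp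
  qed
next
  interpret ring R by (rule R)
  fix u v :: "'a \<times> 'a \<times> 'a"
  assume "u \<in> carrier R \<times> carrier R \<times> carrier R" "v \<in> carrier R \<times> carrier R \<times> carrier R"
  then obtain u1 u2 u3 v1 v2 v3 where u: "u = (u1,u2,u3)" and v: "v = (v1,v2,v3)"
    and c: "u1 \<in> carrier R" "u2 \<in> carrier R" "u3 \<in> carrier R" "v1 \<in> carrier R" "v2 \<in> carrier R" "v3 \<in> carrier R"
    by (metis mem_Times_iff prod.collapse)
  have "u1 \<oplus>\<^bsub>R\<^esub> v1 = v1 \<oplus>\<^bsub>R\<^esub> u1" "u2 \<oplus>\<^bsub>R\<^esub> v2 = v2 \<oplus>\<^bsub>R\<^esub> u2" "u3 \<oplus>\<^bsub>R\<^esub> v3 = v3 \<oplus>\<^bsub>R\<^esub> u3"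
    using c by (simp_all only: a_comm)
  thus "vadd3 R u v = vadd3 R v u" unfolding u v vadd3_def by simp
next
  interpret ring R by (rule R)
  fix u v w :: "'a \<times> 'a \<times> 'a"
  assume "u \<in> carrier R \<times> carrier R \<times> carrier R" "v \<in> carrier R \<times> carrier R \<times> carrier R"
     "w \<in> carrier R \<times> carrier R \<times> carrier R" and eq: "vadd3 R u v = vadd3 R u w"
  then obtain u1 u2 u3 v1 v2 v3 w1 w2 w3 where u: "u = (u1,u2,u3)" and v: "v = (v1,v2,v3)" and w: "w = (w1,w2,w3)"
    and c: "u1 \<in> carrier R" "u2 \<in> carrier R" "u3 \<in> carrier R" "v1 \<in> carrier R" "v2 \<in> carrier R" "v3 \<in> carrier R"
       "w1 \<in> carrier R" "w2 \<in> carrier R" "w3 \<in> carrier R"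
    by (metis mem_Times_iff prod.collapse)
  from eq have e: "u1 \<oplus>\<^bsub>R\<^esub> v1 = u1 \<oplus>\<^bsub>R\<^esub> w1" "u2 \<oplus>\<^bsub>R\<^esub> v2 = u2 \<oplus>\<^bsub>R\<^esub> w2" "u3 \<oplus>\<^bsub>R\<^esub> v3 = u3 \<oplus>\<^bsub>R\<^esub> w3"
    unfolding u v w vadd3_def by simp_all
  have "v1 = w1" using add_lcancel_aux[OF c(1) c(4) c(7) e(1)] .
  moreover have "v2 = w2" using add_lcancel_aux[OF c(2) c(5) c(8) e(2)] .
  moreover have "v3 = w3" using add_lcancel_aux[OF c(3) c(6) c(9) e(3)] .
  ultimately show "v = w" unfolding v w by simp
qed

lemma arith_final:
  fixes n q E :: real
  assumes q3: "q \<ge> 3" and nb: "n \<ge> 4 * q powr (5/3)" and key: "n^4 \<le> q^3 * (E + 6 * n^2)"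
  shows "1/2 * n^4 / q^3 \<le> E"
proof -
  have "q powr (5/3) \<ge> q powr (3/2)"
    using q3 by (intro powr_mono) auto
  hence "(q powr (5/3))^2 \<ge> (q powr (3/2))^2"
    using q3 by (intro power_mono) auto
  moreover have "(q powr (3/2))^2 = q^3"
  proof -
    have "(q powr (3/2))^2 = q powr (3/2) * q powr (3/2)" by (rule power2_eq_square)
    also have "\<dots> = q powr (3/2 + 3/2)" by (rule powr_add[symmetric])
    also have "(3/2 + 3/2 :: real) = real 3" by simp
    also have "q powr real 3 = q ^ 3" using q3 by (intro powr_realpow) simp
    finally show ?thesis .
  qed
  ultimately have a: "(q powr (5/3))^2 \<ge> q^3" by simp
  have "n^2 \<ge> (4 * q powr (5/3))^2"
    using nb q3 by (intro power_mono) auto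
  hence "n^2 \<ge> 16 * (q powr (5/3))^2" by (simp add: power_mult_distrib)
  with a have n2: "n^2 \<ge> 16 * q^3" by linarith
  have qp: "q^3 > 0" using q3 by simp
  have n4: "n^4 = n^2 * n^2"
  proof -
    have "n^4 = n^(2+2)" by simp
    also have "\<dots> = n^2 * n^2" by (rule power_add)
    finally show ?thesis .
  qed
  have h: "n^2 * (16 * q^3) \<le> n^2 * n^2" using n2 by (intro mult_left_mono) auto
  have e: "n^2 * (16 * q^3) = 16 * (n^2 * q^3)" by (simp only: mult_ac)
  have e2: "q^3 * (6 * n^2) = 6 * (n^2 * q^3)" by (simp only: mult_ac)
  have k2: "q^3 * (E + 6 * n^2) = q^3 * E + q^3 * (6 * n^2)" by (rule distrib_left)
  have "n^2 * q^3 \<ge> 0" using qp by simp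
  hence "n^4 / 2 \<le> q^3 * E" using h e e2 k2 key n4 by linarith
  hence "n^4 / 2 \<le> E * q^3" by (simp only: mult.commute)
  hence "(n^4 / 2) / q^3 \<le> E" using qp by (simp only: pos_divide_le_eq)
  thus ?thesis by simp
qed

theorem theorem1p2:
  shows "\<exists>C c :: real. C > 0 \<and> c > 0 \<and>
    (\<forall>(R :: nat ring) X. field R \<and> finite (carrier R) \<and> card (carrier R) mod 4 = 3 \<and>
        X \<subseteq> paraboloid R \<and>
        real (card X) \<ge> C * real (card (carrier R)) powr (5/3) \<longrightarrow>
        real (nt_energy R X) \<ge> c * real (card X) ^ 4 / real (card (carrier R)) ^ 3)"
proof -
  have main: "real (nt_energy R X) \<ge> 1/2 * real (card X) ^ 4 / real (card (carrier R)) ^ 3"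
    if H:  "field R \<and> finite (carrier R) \<and> card (carrier R) mod 4 = 3 \<and>
        X \<subseteq> paraboloid R \<and> real (card X) \<ge> 4 * real (card (carrier R)) powr (5/3)"
    for R :: "nat ring" and X
  proof -
  define K where "K = carrier R \<times> carrier R \<times> carrier R"
  define q where "q = real (card (carrier R))"
  define n where "n = real (card X)"
  define E where "E = real (nt_energy R X)"
  have rR: "ring R" using H by (simp add: field.axioms(1) cring.axioms(1) domain.axioms(1))
  have finC: "finite (carrier R)" using H by simp
  have XK: "X \<subseteq> K" using H by (auto simp: paraboloid_def K_def)
  have finK: "finite K" using finC by (simp add: K_def)
  have finX: "finite X" using XK finK finite_subset by blast
  have cK: "card K = card (carrier R) ^ 3"
    by (simp add: K_def card_cartesian_product power3_eq_cube)
  have "card (carrier R) mod 4 \<le> card (carrier R)" by (rule mod_less_eq_dividend)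
  hence "card (carrier R) \<ge> 3" using H by simp
  hence q3: "q \<ge> 3" unfolding q_def by simp
  note vp = vadd3_props[OF rR, folded K_def]
  have "real (card X)^4 \<le> real (card K) * (real (nt_energy R X) + 6 * real (card X)^2)"
    unfolding nt_energy_def
  proof (rule energy_abstract[OF finX finK])
    fix a b assume "a \<in> X" "b \<in> X"
    thus "vadd3 R a b \<in> K" using vp(1) XK by blast
  next
    fix a b assume "a \<in> X" "b \<in> X"
    thus "vadd3 R a b = vadd3 R b a" using vp(2) XK by blast
  next
    fix a b c assume "a \<in> X" "b \<in> X" "c \<in> X" "vadd3 R a b = vadd3 R a c"
    thus "b = c" using vp(3) XK by blast
  qed
  hence key: "n^4 \<le> q^3 * (E + 6 * n^2)"
    unfolding n_def q_def E_def cK by simp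
  have nb: "n \<ge> 4 * q powr (5/3)" using H by (simp add: n_def q_def)
  have "1/2 * n^4 / q^3 \<le> E" by (rule arith_final[OF q3 nb key])
  thus "1/2 * real (card X) ^ 4 / real (card (carrier R)) ^ 3 \<le> real (nt_energy R X)"
    unfolding n_def q_def E_def .
  qed
  show ?thesis
    apply (rule exI[of _ "4::real"], rule exI[of _ "1/2::real"])
    apply (intro conjI allI impI)
      apply simp
     apply simp
    apply (erule main)
    done
qed

end
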